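(* Let $R$ be a tolerance relation on $X=\{1,\ldots,n\}$ and assume that every $a\in A(R)$ with $a\succeq0$ is of the form $a=\sum_{i=1}^k b_i\star b_i^*$ for some $b_1,\ldots,b_k\in A(R)$. Then the graph of $R$ has a dominant vertex in each connected component.
   Context: A tolerance relation is a reflexive and symmetric relation; its graph has an edge between $i\ne j$ whenever $(i,j)\in R$; a dominant vertex is a vertex adjacent to all other vertices of its connected component. $T(b)=\sum_{(i,j)\in R}E_{ii}bE_{jj}$ for $b\in M_n(\mathbb{C})$, $A(R)=T(M_n(\mathbb{C}))$ with product $a\star b=T(ab)$ and involution the conjugate transpose. For $a\in A(R)$, $a\succeq0$ means $a=T(b)$ for some positive semidefinite $b\in M_n(\mathbb{C})$. *)

theory Defs
  imports "HOL-Analysis.Analysis"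
begin

text \<open>Square complex matrices indexed by a finite type 'n (playing the role of X = {1..n}).\<close>

definition tolerance :: "('n \<times> 'n) set \<Rightarrow> bool" where
  "tolerance R \<longleftrightarrow> (\<forall>i. (i, i) \<in> R) \<and> (\<forall>i j. (i, j) \<in> R \<longrightarrow> (j, i) \<in> R)"

text \<open>T(b) = sum over (i,j) in R of E_ii b E_jj, i.e. entrywise masking.\<close>
definition Tmap :: "('n::finite \<times> 'n) set \<Rightarrow> complex^'n^'n \<Rightarrow> complex^'n^'n" where
  "Tmap R b = (\<chi> i j. if (i, j) \<in> R then b $ i $ j else 0)"

definition AR :: "('n::finite \<times> 'n) set \<Rightarrow> (complex^'n^'n) set" where
  "AR R = Tmap R ` UNIV"

definition star_prod :: "('n::finite \<times> 'n) set \<Rightarrow> complex^'n^'n \<Rightarrow> complex^'n^'n \<Rightarrow> complex^'n^'n" where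
  "star_prod R a b = Tmap R (a ** b)"

definition adjoint_mat :: "complex^'n^'n \<Rightarrow> complex^'n^'n" where
  "adjoint_mat a = (\<chi> i j. cnj (a $ j $ i))"

definition psd :: "complex^'n::finite^'n \<Rightarrow> bool" where
  "psd b \<longleftrightarrow> adjoint_mat b = b \<and>
     (\<forall>x :: complex^'n. 0 \<le> Re (\<Sum>i\<in>UNIV. \<Sum>j\<in>UNIV. cnj (x $ i) * b $ i $ j * x $ j)
                        \<and> Im (\<Sum>i\<in>UNIV. \<Sum>j\<in>UNIV. cnj (x $ i) * b $ i $ j * x $ j) = 0)"

text \<open>a \<succeq> 0 in A(R): a = T(b) for some positive semidefinite b.\<close>
definition AR_pos :: "('n::finite \<times> 'n) set \<Rightarrow> complex^'n^'n \<Rightarrow> bool" where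
  "AR_pos R a \<longleftrightarrow> (\<exists>b. psd b \<and> a = Tmap R b)"

text \<open>Graph of R: edge between i \<noteq> j iff (i,j) \<in> R. Connected component of x: {y. (x,y) \<in> R^*}.
  A vertex v is dominant if it is adjacent to every other vertex of its component.\<close>
definition dominant :: "('n \<times> 'n) set \<Rightarrow> 'n \<Rightarrow> bool" where
  "dominant R v \<longleftrightarrow> (\<forall>w. (v, w) \<in> R\<^sup>* \<longrightarrow> w \<noteq> v \<longrightarrow> (v, w) \<in> R)"

end

theory Submission
  imports Defs
begin

lemma entry_sum:
  fixes R :: "('n::finite \<times> 'n) set"
  shows "(\<Sum>k<K. star_prod R (bs k) (adjoint_mat (bs k))) $ i $ l =
    (if (i,l) \<in> R then (\<Sum>k<K. \<Sum>j\<in>UNIV. bs k $ i $ j * cnj (bs k $ l $ j)) else 0)"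
  by (simp add: sum_component star_prod_def Tmap_def matrix_matrix_mult_def adjoint_mat_def)

lemma AR_zero:
  assumes "b \<in> AR R" "(i,j) \<notin> R"
  shows "b $ i $ j = 0"
  using assms by (auto simp: AR_def Tmap_def)

lemma diff_sq:
  fixes p q :: complex
  shows "(p - q) * cnj (p - q) = p * cnj p + q * cnj q - p * cnj q - q * cnj p"
  by (simp add: algebra_simps)

lemma sq_real: "(p::complex) * cnj p = complex_of_real ((cmod p)^2)"
  by (simp add: complex_mult_cnj cmod_power2)

lemma cnj_sq: "0 \<le> Re (cnj s * s) \<and> Im (cnj s * s) = 0"
  by (simp add: mult.commute[of "cnj s"] sq_real)

theorem proposition4p15:
  fixes R :: "('n::finite \<times> 'n) set"
  assumes "tolerance R"
    and "\<forall>a \<in> AR R. AR_pos R a \<longrightarrow>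
           (\<exists>(k::nat) bs. (\<forall>i<k. bs i \<in> AR R) \<and>
                   a = (\<Sum>i<k. star_prod R (bs i) (adjoint_mat (bs i))))"
  shows "\<forall>x. \<exists>v. (x, v) \<in> R\<^sup>* \<and> dominant R v"
proof
  fix x
  have refl: "\<And>i. (i,i) \<in> R" and sym: "\<And>i j. (i,j) \<in> R \<Longrightarrow> (j,i) \<in> R"
    using assms(1) by (auto simp: tolerance_def)
  define C where "C = {y. (x,y) \<in> R\<^sup>*}"
  define J :: "complex^'n^'n" where "J = (\<chi> i j. if i \<in> C \<and> j \<in> C then 1 else 0)"
  define a where "a = Tmap R J"
  have aAR: "a \<in> AR R" unfolding a_def AR_def by simp
  have quad: "(\<Sum>i\<in>UNIV. \<Sum>j\<in>UNIV. cnj (z $ i) * J $ i $ j * z $ j)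
      = cnj (\<Sum>i\<in>C. z $ i) * (\<Sum>j\<in>C. z $ j)" for z :: "complex^'n"
  proof -
    have "(\<Sum>i\<in>UNIV. \<Sum>j\<in>UNIV. cnj (z $ i) * J $ i $ j * z $ j)
        = (\<Sum>i\<in>UNIV. \<Sum>j\<in>UNIV. (if i \<in> C then cnj (z $ i) else 0) * (if j \<in> C then z $ j else 0))"
      by (intro sum.cong refl) (auto simp: J_def)
    also have "\<dots> = (\<Sum>i\<in>UNIV. (if i \<in> C then cnj (z $ i) else 0)) * (\<Sum>j\<in>UNIV. (if j \<in> C then z $ j else 0))"
      by (simp add: sum_product)
    also have "\<dots> = (\<Sum>i\<in>C. cnj (z $ i)) * (\<Sum>j\<in>C. z $ j)"
      by (simp add: sum.If_cases)
    finally show ?thesis by (simp add: cnj_sum)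
  qed
  have "psd J"
    unfolding psd_def
  proof (intro conjI allI)
    show "adjoint_mat J = J" by (simp add: adjoint_mat_def J_def vec_eq_iff)
  next
    fix z :: "complex^'n"
    show "0 \<le> Re (\<Sum>i\<in>UNIV. \<Sum>j\<in>UNIV. cnj (z $ i) * J $ i $ j * z $ j)"
      "Im (\<Sum>i\<in>UNIV. \<Sum>j\<in>UNIV. cnj (z $ i) * J $ i $ j * z $ j) = 0"
      unfolding quad using cnj_sq by blast+
  qed
  then have "AR_pos R a" unfolding AR_pos_def a_def by blast
  then have "\<exists>(K::nat) bs. (\<forall>k<K. bs k \<in> AR R) \<and> a = (\<Sum>k<K. star_prod R (bs k) (adjoint_mat (bs k)))"
    using assms(2) aAR by simp
  then obtain K :: nat and bs where bsAR: "\<forall>k<K. bs k \<in> AR R"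
    and aeq: "a = (\<Sum>k<K. star_prod R (bs k) (adjoint_mat (bs k)))" by blast
  define S where "S i l = (\<Sum>k<K. \<Sum>j\<in>UNIV. bs k $ i $ j * cnj (bs k $ l $ j))" for i l
  have S1: "S i l = 1" if "i \<in> C" "l \<in> C" "(i,l) \<in> R" for i l
  proof -
    have "a $ i $ l = S i l" using that unfolding aeq entry_sum S_def by simp
    moreover have "a $ i $ l = 1" using that by (simp add: a_def Tmap_def J_def)
    ultimately show ?thesis by simp
  qed
  have same: "bs k $ i $ j = bs k $ l $ j" if "i \<in> C" "l \<in> C" "(i,l) \<in> R" "k < K" for i l k j
  proof -
    have "(\<Sum>k<K. \<Sum>j\<in>UNIV. (bs k $ i $ j - bs k $ l $ j) * cnj (bs k $ i $ j - bs k $ l $ j))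
        = S i i + S l l - S i l - S l i"
      unfolding diff_sq S_def by (simp add: sum_subtractf sum.distrib)
    also have "\<dots> = 0" using that S1 refl sym by simp
    finally have "(\<Sum>k<K. \<Sum>j\<in>UNIV. complex_of_real ((cmod (bs k $ i $ j - bs k $ l $ j))^2)) = 0"
      by (simp only: sq_real)
    then have "(\<Sum>k<K. \<Sum>j\<in>UNIV. (cmod (bs k $ i $ j - bs k $ l $ j))^2) = 0"
      by (metis (no_types, lifting) of_real_eq_0_iff of_real_sum sum.cong)
    then have "\<forall>k\<in>{..<K}. (\<Sum>j\<in>UNIV. (cmod (bs k $ i $ j - bs k $ l $ j))^2) = 0"
      by (subst (asm) sum_nonneg_eq_0_iff) (auto intro: sum_nonneg)
    then have "(\<Sum>j\<in>UNIV. (cmod (bs k $ i $ j - bs k $ l $ j))^2) = 0" using that by auto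
    then have "\<forall>j\<in>UNIV. (cmod (bs k $ i $ j - bs k $ l $ j))^2 = 0"
      by (subst (asm) sum_nonneg_eq_0_iff) auto
    then show ?thesis by simp
  qed
  have xC: "x \<in> C" by (simp add: C_def)
  have allsame: "bs k $ y $ j = bs k $ x $ j" if "y \<in> C" "k < K" for y k j
  proof -
    have "(x,y) \<in> R\<^sup>*" using that by (simp add: C_def)
    then show ?thesis
    proof (induction rule: rtrancl_induct)
      case base then show ?case by simp
    next
      case (step y z)
      have "y \<in> C" "z \<in> C" using step.hyps by (auto simp: C_def)
      then show ?case using same[OF _ _ step.hyps(2) \<open>k < K\<close>] step.IH by metis
    qed
  qed
  have "S x x = 1" using S1 xC refl by simp
  then obtain k j where kj: "k < K" "bs k $ x $ j \<noteq> 0"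
    unfolding S_def by (metis (no_types, lifting) mult_zero_left sum.neutral zero_neq_one lessThan_iff)
  have adj: "(y,j) \<in> R" if "y \<in> C" for y
  proof (rule ccontr)
    assume "(y,j) \<notin> R"
    then have "bs k $ y $ j = 0" using AR_zero bsAR kj(1) by blast
    then show False using allsame[OF that kj(1)] kj(2) by simp
  qed
  have xj: "(x,j) \<in> R" using adj xC .
  show "\<exists>v. (x, v) \<in> R\<^sup>* \<and> dominant R v"
  proof (intro exI conjI)
    show "(x,j) \<in> R\<^sup>*" using xj by blast
    show "dominant R j" unfolding dominant_def
    proof (intro allI impI)
      fix w assume "(j,w) \<in> R\<^sup>*"
      then have "(x,w) \<in> R\<^sup>*" using xj by (meson converse_rtrancl_into_rtrancl)
      then have "(w,j) \<in> R" using adj by (simp add: C_def)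
      then show "(j,w) \<in> R" using sym by blast
    qed
  qed
qed

end
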